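(* Let $p\in[0,1)$, $z=(z_1,\dots,z_N)\in\mathbb R^N_+$, $\beta\in\mathbb R^N$, and $z(t)=z+t\beta$ for $|t|$ small enough that $z(t)\in\mathbb R^N_+$. Write $\xi_p(t)=\xi_p(z(t))$. If $\xi_p(0)=o$, then $\xi_p'(0)$ exists, and moreover $$o=\sum_{j=1}^N z_j^{p-1}\alpha_jv_j.$$
   Context: $\mathbb R^N_+=\{x\in\mathbb R^N: x_i>0\ \forall i\}$. Fix unit vectors $v_1,\dots,v_N\in S^{n-1}$ not contained in any closed hemisphere and weights $\alpha_1,\dots,\alpha_N>0$. For $z\in\mathbb R^N$ let $[z]=\{x\in\mathbb R^n:x\cdot v_j\le z_j,\ j=1,\dots,N\}$ (for $z\in\mathbb R^N_+$ this contains $o$ in its interior). For $\xi\in[z]$, $\Phi_p(z,\xi)=\sum_j(z_j-\xi\cdot v_j)^p\alpha_j$ if $p\in(0,1)$ and $\Phi_0(z,\xi)=\sum_j\alpha_j\log(z_j-\xi\cdot v_j)$ (with $\log0=-\infty$). When $[z]$ has nonempty interior, $\xi_p(z)$ denotes the unique maximizer of $\Phi_p(z,\cdot)$ over $[z]$, which is known to lie in the interior of $[z]$. *)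

theory Defs
  imports "HOL-Analysis.Analysis"
begin

definition polyset :: "nat \<Rightarrow> (nat \<Rightarrow> 'a::euclidean_space) \<Rightarrow> (nat \<Rightarrow> real) \<Rightarrow> 'a set" where
  "polyset N v z = {x. \<forall>j<N. x \<bullet> v j \<le> z j}"

text \<open>Phi_p(z,xi) as an extended real; for p = 0 the log of 0 is -infinity.\<close>
definition Phi :: "nat \<Rightarrow> (nat \<Rightarrow> 'a::euclidean_space) \<Rightarrow> (nat \<Rightarrow> real) \<Rightarrow> real
                   \<Rightarrow> (nat \<Rightarrow> real) \<Rightarrow> 'a \<Rightarrow> ereal" where
  "Phi N v alpha p z \<xi> =
     (if p = 0 then
        (if (\<forall>j<N. z j - \<xi> \<bullet> v j > 0)
         then ereal (\<Sum>j<N. alpha j * ln (z j - \<xi> \<bullet> v j))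
         else -\<infinity>)
      else ereal (\<Sum>j<N. (z j - \<xi> \<bullet> v j) powr p * alpha j))"

definition xi :: "nat \<Rightarrow> (nat \<Rightarrow> 'a::euclidean_space) \<Rightarrow> (nat \<Rightarrow> real) \<Rightarrow> real
                   \<Rightarrow> (nat \<Rightarrow> real) \<Rightarrow> 'a" where
  "xi N v alpha p z =
     (THE \<xi>. \<xi> \<in> polyset N v z \<and>
        (\<forall>\<eta>\<in>polyset N v z. Phi N v alpha p z \<eta> \<le> Phi N v alpha p z \<xi>))"

end

theory Submission
  imports Defs
begin


definition gg :: "real \<Rightarrow> real \<Rightarrow> real" where
  "gg p s = (if p = 0 then ln s else s powr p)"
definition kap :: "real \<Rightarrow> real" where "kap p = (if p = 0 then 1 else p)"
definition g1 :: "real \<Rightarrow> real \<Rightarrow> real" where "g1 p s = kap p * s powr (p - 1)"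
definition g2 :: "real \<Rightarrow> real \<Rightarrow> real" where "g2 p s = kap p * (p - 1) * s powr (p - 2)"

lemma kap_pos: "0 \<le> p \<Longrightarrow> kap p > 0"
  by (auto simp: kap_def)

lemma DG: assumes "s > 0" shows "DERIV (gg p) s :> g1 p s"
proof (cases "p = 0")
  case True
  have "DERIV ln s :> inverse s" using DERIV_ln assms by blast
  moreover have "inverse s = g1 p s" using True assms by (simp add: g1_def kap_def powr_minus)
  ultimately show ?thesis using True by (simp add: gg_def[abs_def])
next
  case False
  have "DERIV (\<lambda>s. s powr p) s :> p * s powr (p - 1)" using has_real_derivative_powr assms by blast
  then show ?thesis using False by (simp add: gg_def[abs_def] g1_def kap_def)
qed

lemma DG1: assumes "s > 0" shows "DERIV (g1 p) s :> g2 p s"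
proof -
  have "DERIV (\<lambda>s. s powr (p - 1)) s :> (p - 1) * s powr (p - 1 - 1)" using has_real_derivative_powr assms by blast
  then have "DERIV (\<lambda>s. kap p * s powr (p - 1)) s :> kap p * ((p - 1) * s powr (p - 1 - 1))"
    by (rule DERIV_cmult)
  then show ?thesis by (simp add: g1_def[abs_def] g2_def algebra_simps)
qed

lemma TL:
  assumes a: "a > 0" and b: "b > 0" and ne: "b \<noteq> a"
  shows "\<exists>\<theta>. 0 < \<theta> \<and> \<theta> \<le> max a b \<and> gg p b = gg p a + g1 p a * (b - a) + g2 p \<theta> / 2 * (b - a)\<^sup>2"
proof -
  define diff where "diff = (\<lambda>m::nat. if m = 0 then gg p else if m = 1 then g1 p else g2 p)"
  have D: "\<forall>m t. m < 2 \<and> min a b \<le> t \<and> t \<le> max a b \<longrightarrow> DERIV (diff m) t :> diff (Suc m) t"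
  proof (intro allI impI)
    fix m :: nat and t :: real assume h: "m < 2 \<and> min a b \<le> t \<and> t \<le> max a b"
    then have "t > 0" using a b by linarith
    show "DERIV (diff m) t :> diff (Suc m) t"
    proof (cases "m = 0")
      case True then show ?thesis using DG[OF \<open>t>0\<close>] by (simp add: diff_def)
    next
      case False then have "m = 1" using h by auto
      then show ?thesis using DG1[OF \<open>t>0\<close>] by (simp add: diff_def)
    qed
  qed
  obtain t where t: "(if b < a then b < t \<and> t < a else a < t \<and> t < b)"
    and eq: "gg p b = (\<Sum>m<2. (diff m a / fact m) * (b - a)^m) + (diff 2 t / fact 2) * (b - a)^2"
    using Taylor[of 2 diff "gg p" "min a b" "max a b" a b] D ne by (auto simp: diff_def)
  have "t > 0" "t \<le> max a b" using t a b by (auto split: if_splits)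
  moreover have "gg p b = gg p a + g1 p a * (b - a) + g2 p t / 2 * (b - a)\<^sup>2"
    using eq by (simp add: diff_def numeral_2_eq_2)
  ultimately show ?thesis by blast
qed

lemma g2_neg: assumes "0 \<le> p" "p < 1" "t > 0" shows "g2 p t < 0"
proof -
  have "kap p * (p - 1) < 0" using kap_pos[OF assms(1)] assms(2) by (simp add: mult_pos_neg)
  then show ?thesis unfolding g2_def using assms(3) by (simp add: mult_neg_pos)
qed

lemma T_strict:
  assumes p: "0 \<le> p" "p < 1" and a: "a > 0" and b: "b \<ge> 0" and bp: "p = 0 \<longrightarrow> b > 0" and ne: "b \<noteq> a"
  shows "gg p b < gg p a + g1 p a * (b - a)"
proof (cases "b = 0")
  case True
  then have "p > 0" using bp p by auto
  have "a powr (p - 1) * a = a powr p" using a by (simp add: powr_diff)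
  then have "g1 p a * (b - a) = - p * a powr p" using True \<open>p>0\<close> by (simp add: g1_def kap_def algebra_simps)
  moreover have "a powr p > 0" using a by simp
  ultimately show ?thesis using True \<open>p>0\<close> p by (simp add: gg_def algebra_simps)
next
  case False
  then have "b > 0" using b by auto
  obtain \<theta> where th: "0 < \<theta>" "gg p b = gg p a + g1 p a * (b - a) + g2 p \<theta> / 2 * (b - a)\<^sup>2"
    using TL[OF a \<open>b>0\<close> ne] by blast
  have "g2 p \<theta> / 2 * (b - a)\<^sup>2 < 0" using g2_neg[OF p th(1)] ne
    by (simp add: mult_neg_pos)
  then show ?thesis using th by linarith
qed

lemma SC:
  assumes p: "0 \<le> p" "p < 1" and a: "a > 0" and b: "b > 0" and ah: "a \<le> hi" and bh: "b \<le> hi"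
  shows "gg p b \<le> gg p a + g1 p a * (b - a) - kap p * (1 - p) * hi powr (p - 2) / 2 * (b - a)\<^sup>2"
proof (cases "b = a")
  case True then show ?thesis by simp
next
  case False
  obtain \<theta> where th: "0 < \<theta>" "\<theta> \<le> max a b" "gg p b = gg p a + g1 p a * (b - a) + g2 p \<theta> / 2 * (b - a)\<^sup>2"
    using TL[OF a b False] by blast
  have "\<theta> \<le> hi" using th ah bh by linarith
  then have "hi powr (p - 2) \<le> \<theta> powr (p - 2)" using powr_mono2'[of "p - 2" \<theta> hi] th p by simp
  moreover have "kap p * (1 - p) \<ge> 0" using kap_pos[OF p(1)] p by simp
  ultimately have "kap p * (1 - p) * hi powr (p - 2) \<le> kap p * (1 - p) * \<theta> powr (p - 2)"
    by (rule mult_left_mono)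
  then have "g2 p \<theta> \<le> - (kap p * (1 - p) * hi powr (p - 2))"
    unfolding g2_def by (simp add: algebra_simps)
  then have "g2 p \<theta> / 2 * (b - a)\<^sup>2 \<le> - (kap p * (1 - p) * hi powr (p - 2)) / 2 * (b - a)\<^sup>2"
    by (intro mult_right_mono) auto
  then show ?thesis using th by simp
qed


definition PR :: "nat \<Rightarrow> (nat \<Rightarrow> 'a::euclidean_space) \<Rightarrow> (nat \<Rightarrow> real) \<Rightarrow> real \<Rightarrow> (nat \<Rightarrow> real) \<Rightarrow> 'a \<Rightarrow> real" where
  "PR N v alpha p w \<xi> = (\<Sum>j<N. alpha j * gg p (w j - \<xi> \<bullet> v j))"

lemma Phi_PR: "\<forall>j<N. w j - \<xi> \<bullet> v j > 0 \<Longrightarrow> Phi N v alpha p w \<xi> = ereal (PR N v alpha p w \<xi>)"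
  by (auto simp: Phi_def PR_def gg_def mult.commute)

lemma Phi_PR2: "p \<noteq> 0 \<Longrightarrow> Phi N v alpha p w \<xi> = ereal (PR N v alpha p w \<xi>)"
  by (auto simp: Phi_def PR_def gg_def mult.commute)

lemma CP:
  fixes v :: "nat \<Rightarrow> 'a::euclidean_space"
  assumes hemi: "\<forall>u::'a. norm u = 1 \<longrightarrow> (\<exists>j<N. v j \<bullet> u < 0)"
    and apos: "\<forall>j<N. alpha j > 0" and p: "0 \<le> p" "p < 1"
    and mpos: "\<forall>j<N. w j - m \<bullet> v j > 0"
    and crit: "(\<Sum>j<N. ((w j - m \<bullet> v j) powr (p - 1) * alpha j) *\<^sub>R v j) = 0"
  shows "xi N v alpha p w = m"
proof -
  define a where "a j = w j - m \<bullet> v j" for j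
  have strict: "Phi N v alpha p w \<eta> < Phi N v alpha p w m" if eta: "\<eta> \<in> polyset N v w" "\<eta> \<noteq> m" for \<eta>
  proof -
    define b where "b j = w j - \<eta> \<bullet> v j" for j
    have b0: "\<forall>j<N. b j \<ge> 0" using eta(1) by (auto simp: polyset_def b_def)
    have Pm: "Phi N v alpha p w m = ereal (PR N v alpha p w m)" using Phi_PR mpos by blast
    show ?thesis
    proof (cases "p = 0 \<and> (\<exists>j<N. b j \<le> 0)")
      case True
      then have "Phi N v alpha p w \<eta> = -\<infinity>" by (auto simp: Phi_def b_def)
      then show ?thesis using Pm by simp
    next
      case False
      then have bpos: "\<forall>j<N. p = 0 \<longrightarrow> b j > 0" by auto
      have Pe: "Phi N v alpha p w \<eta> = ereal (PR N v alpha p w \<eta>)"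
      proof (cases "p = 0")
        case True then show ?thesis using Phi_PR bpos by (simp add: b_def)
      next
        case False then show ?thesis using Phi_PR2 by blast
      qed
      define u where "u = (1 / norm (\<eta> - m)) *\<^sub>R (\<eta> - m)"
      have "norm u = 1" using eta(2) by (simp add: u_def)
      then obtain j0 where j0: "j0 < N" "v j0 \<bullet> u < 0" using hemi by blast
      then have "v j0 \<bullet> (\<eta> - m) \<noteq> 0" by (auto simp: u_def)
      then have j0ne: "b j0 \<noteq> a j0" by (auto simp: a_def b_def inner_diff_right inner_commute)
      have "(\<Sum>j<N. alpha j * gg p (b j)) < (\<Sum>j<N. alpha j * (gg p (a j) + g1 p (a j) * (b j - a j)))"
      proof (rule sum_strict_mono_ex1)
        show "\<forall>j\<in>{..<N}. alpha j * gg p (b j) \<le> alpha j * (gg p (a j) + g1 p (a j) * (b j - a j))"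
        proof
          fix j assume "j \<in> {..<N}"
          then have j: "j < N" by simp
          show "alpha j * gg p (b j) \<le> alpha j * (gg p (a j) + g1 p (a j) * (b j - a j))"
          proof (cases "b j = a j")
            case True then show ?thesis by simp
          next
            case False
            have "gg p (b j) < gg p (a j) + g1 p (a j) * (b j - a j)"
              using T_strict[OF p, of "a j" "b j"] j False b0 bpos mpos by (auto simp: a_def)
            then show ?thesis using apos j by simp
          qed
        qed
        have "gg p (b j0) < gg p (a j0) + g1 p (a j0) * (b j0 - a j0)"
          using T_strict[OF p, of "a j0" "b j0"] j0 j0ne b0 bpos mpos by (auto simp: a_def)
        then show "\<exists>j\<in>{..<N}. alpha j * gg p (b j) < alpha j * (gg p (a j) + g1 p (a j) * (b j - a j))"
          using apos j0 by (intro bexI[of _ j0]) auto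
      qed simp
      also have "\<dots> = (\<Sum>j<N. alpha j * gg p (a j)) + (\<Sum>j<N. alpha j * (g1 p (a j) * (b j - a j)))"
        by (simp add: sum.distrib[symmetric] distrib_left)
      also have "(\<Sum>j<N. alpha j * (g1 p (a j) * (b j - a j))) = - kap p * ((\<Sum>j<N. ((w j - m \<bullet> v j) powr (p - 1) * alpha j) *\<^sub>R v j) \<bullet> (\<eta> - m))"
      proof -
        have "(\<Sum>j<N. ((w j - m \<bullet> v j) powr (p - 1) * alpha j) *\<^sub>R v j) \<bullet> (\<eta> - m)
           = (\<Sum>j<N. ((w j - m \<bullet> v j) powr (p - 1) * alpha j) * (v j \<bullet> (\<eta> - m)))"
          by (simp add: inner_sum_left)
        moreover have "\<And>j. b j - a j = - (v j \<bullet> (\<eta> - m))"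
          by (simp add: a_def b_def inner_diff_right inner_commute)
        ultimately show ?thesis
          by (simp add: sum_distrib_left g1_def a_def[symmetric] sum_negf[symmetric] ) (simp add: algebra_simps)
      qed
      also have "\<dots> = 0" using crit by simp
      finally have "PR N v alpha p w \<eta> < PR N v alpha p w m" by (simp add: PR_def a_def b_def)
      then show ?thesis using Pe Pm by simp
    qed
  qed
  have mP: "m \<in> polyset N v w" using mpos by (auto simp: polyset_def less_imp_le)
  have mmax: "\<forall>\<eta>\<in>polyset N v w. Phi N v alpha p w \<eta> \<le> Phi N v alpha p w m"
    using strict by (metis order.order_iff_strict)
  show ?thesis unfolding xi_def
  proof (rule the_equality)
    show "m \<in> polyset N v w \<and> (\<forall>\<eta>\<in>polyset N v w. Phi N v alpha p w \<eta> \<le> Phi N v alpha p w m)"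
      using mP mmax by blast
  next
    fix \<xi> assume h: "\<xi> \<in> polyset N v w \<and> (\<forall>\<eta>\<in>polyset N v w. Phi N v alpha p w \<eta> \<le> Phi N v alpha p w \<xi>)"
    show "\<xi> = m"
    proof (rule ccontr)
      assume "\<xi> \<noteq> m"
      then have "Phi N v alpha p w \<xi> < Phi N v alpha p w m" using strict h by blast
      moreover have "Phi N v alpha p w m \<le> Phi N v alpha p w \<xi>" using h mP by blast
      ultimately show False by simp
    qed
  qed
qed


lemma FL:
  fixes v :: "nat \<Rightarrow> 'a::euclidean_space"
  assumes mpos: "\<forall>j<N. w j - m \<bullet> v j > 0" and e: "e > 0" and p: "0 \<le> p"
    and loc: "\<forall>\<xi>\<in>ball m e. PR N v alpha p w \<xi> \<le> PR N v alpha p w m"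
  shows "(\<Sum>j<N. ((w j - m \<bullet> v j) powr (p - 1) * alpha j) *\<^sub>R v j) = 0"
proof -
  define u where "u = (\<Sum>j<N. ((w j - m \<bullet> v j) powr (p - 1) * alpha j) *\<^sub>R v j)"
  define a where "a j = w j - m \<bullet> v j" for j
  define h where "h t = (\<Sum>j<N. alpha j * gg p (a j - t * (v j \<bullet> u)))" for t
  have hPR: "h t = PR N v alpha p w (m + t *\<^sub>R u)" for t
    by (simp add: h_def PR_def a_def inner_add_left inner_commute algebra_simps)
  have der: "DERIV h 0 :> (\<Sum>j<N. alpha j * (g1 p (a j) * (- (v j \<bullet> u))))"
    unfolding h_def
  proof (rule DERIV_sum)
    fix j assume "j \<in> {..<N}"
    then have aj: "a j > 0" using mpos by (simp add: a_def)
    have "DERIV (\<lambda>t. a j - t * (v j \<bullet> u)) 0 :> - (v j \<bullet> u)"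
      by (auto intro!: derivative_eq_intros)
    moreover have "DERIV (gg p) (a j - 0 * (v j \<bullet> u)) :> g1 p (a j)" using DG aj by simp
    ultimately have "DERIV (\<lambda>t. gg p (a j - t * (v j \<bullet> u))) 0 :> g1 p (a j) * (- (v j \<bullet> u))"
      using DERIV_chain2 by (metis (no_types))
    then show "DERIV (\<lambda>t. alpha j * gg p (a j - t * (v j \<bullet> u))) 0 :> alpha j * (g1 p (a j) * (- (v j \<bullet> u)))"
      by (rule DERIV_cmult)
  qed
  have val: "(\<Sum>j<N. alpha j * (g1 p (a j) * (- (v j \<bullet> u)))) = - kap p * (u \<bullet> u)"
  proof -
    have "u \<bullet> u = (\<Sum>j<N. ((w j - m \<bullet> v j) powr (p - 1) * alpha j) * (v j \<bullet> u))"
      by (simp add: u_def[of ] inner_sum_left)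
    then show ?thesis
      by (simp add: sum_distrib_left g1_def a_def sum_negf[symmetric] algebra_simps )
  qed
  define d where "d = e / (norm u + 1)"
  have d: "d > 0" using e by (simp add: d_def add_nonneg_pos)
  have "\<forall>y. \<bar>0 - y\<bar> < d \<longrightarrow> h y \<le> h 0"
  proof (intro allI impI)
    fix y :: real assume "\<bar>0 - y\<bar> < d"
    moreover have "norm u + 1 > 0" by (simp add: add_nonneg_pos)
    ultimately have "\<bar>y\<bar> * (norm u + 1) < e" by (simp add: d_def pos_less_divide_eq)
    then have "norm (y *\<^sub>R u) < e" by (smt (verit) abs_ge_zero mult_left_mono norm_scaleR)
    then have "m + y *\<^sub>R u \<in> ball m e" by (simp add: dist_norm)
    then show "h y \<le> h 0" using loc hPR by simp
  qed
  then have "- kap p * (u \<bullet> u) = 0" using DERIV_local_max[OF der d] val by simp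
  then have "u \<bullet> u = 0" using kap_pos[OF p] by simp
  then show ?thesis by (simp add: u_def)
qed


lemma DEL:
  fixes v :: "nat \<Rightarrow> 'a::euclidean_space"
  assumes hemi: "\<forall>u::'a. norm u = 1 \<longrightarrow> (\<exists>j<N. v j \<bullet> u < 0)"
  shows "N > 0 \<and> (\<exists>\<delta>>0. \<forall>u::'a. norm u = 1 \<longrightarrow> (\<exists>j<N. v j \<bullet> u \<ge> \<delta>))"
proof -
  define f where "f u = (\<Sum>j<N. max 0 (v j \<bullet> u))" for u :: 'a
  obtain x :: 'a where x: "norm x = 1" using vector_choose_size[of 1] by auto
  have "compact (sphere (0::'a) 1)" by simp
  moreover have "sphere (0::'a) 1 \<noteq> {}" using x by auto
  moreover have "continuous_on (sphere (0::'a) 1) f" unfolding f_def by (intro continuous_intros)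
  ultimately obtain u0 where u0: "u0 \<in> sphere 0 1" "\<forall>y\<in>sphere 0 1. f u0 \<le> f y"
    using continuous_attains_inf by blast
  have "norm (- u0) = 1" using u0 by simp
  then obtain j where j: "j < N" "v j \<bullet> (- u0) < 0" using hemi by blast
  then have N: "N > 0" by simp
  have "max 0 (v j \<bullet> u0) \<le> f u0" unfolding f_def
    by (rule member_le_sum[where f = "\<lambda>j. max 0 (v j \<bullet> u0)"]) (use j in auto)
  then have fpos: "f u0 > 0" using j by auto
  define \<delta> where "\<delta> = f u0 / N"
  have \<delta>: "\<delta> > 0" using fpos N by (simp add: \<delta>_def)
  have "\<exists>j<N. v j \<bullet> u \<ge> \<delta>" if u: "norm u = 1" for u
  proof (rule ccontr)
    assume "\<not> (\<exists>j<N. v j \<bullet> u \<ge> \<delta>)"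
    then have "\<forall>j\<in>{..<N}. max 0 (v j \<bullet> u) < \<delta>" using \<delta> by auto
    then have "f u < (\<Sum>j<N. \<delta>)" unfolding f_def using N
      by (intro sum_strict_mono) auto
    also have "\<dots> = f u0" using N by (simp add: \<delta>_def)
    finally show False using u0 u by force
  qed
  then show ?thesis using N \<delta> by blast
qed

lemma BND:
  fixes v :: "nat \<Rightarrow> 'a::euclidean_space"
  assumes hemi: "\<forall>u::'a. norm u = 1 \<longrightarrow> (\<exists>j<N. v j \<bullet> u < 0)"
  shows "bounded (polyset N v w)"
proof -
  obtain \<delta> where \<delta>: "\<delta> > 0" "\<forall>u::'a. norm u = 1 \<longrightarrow> (\<exists>j<N. v j \<bullet> u \<ge> \<delta>)"
    using DEL[OF hemi] by blast
  have "norm x \<le> (\<Sum>j<N. \<bar>w j\<bar>) / \<delta>" if x: "x \<in> polyset N v w" for x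
  proof (cases "x = 0")
    case True then show ?thesis using \<delta> by (simp add: sum_nonneg)
  next
    case False
    define u where "u = (1 / norm x) *\<^sub>R x"
    have "norm u = 1" using False by (simp add: u_def)
    then obtain j where j: "j < N" "v j \<bullet> u \<ge> \<delta>" using \<delta> by blast
    have "v j \<bullet> x = norm x * (v j \<bullet> u)" using False by (simp add: u_def)
    then have "norm x * \<delta> \<le> v j \<bullet> x" using j by (simp add: mult_left_mono)
    also have "\<dots> \<le> w j" using x j by (simp add: polyset_def inner_commute)
    also have "\<dots> \<le> (\<Sum>j<N. \<bar>w j\<bar>)"
      using member_le_sum[of j "{..<N}" "\<lambda>j. \<bar>w j\<bar>"] j by force
    finally show ?thesis using \<delta> by (simp add: pos_le_divide_eq)
  qed
  then show ?thesis unfolding bounded_iff by blast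
qed

lemma CLO: "closed (polyset N v w)"
proof -
  have "polyset N v w = (\<Inter>j\<in>{..<N}. {x. inner (v j) x \<le> w j})"
    by (auto simp: polyset_def inner_commute)
  then show ?thesis by (auto intro!: closed_INT closed_halfspace_le)
qed

lemma OPN: "open {\<xi>::'a::euclidean_space. \<forall>j<(N::nat). w j - \<xi> \<bullet> v j > 0}"
proof -
  have "{\<xi>::'a. \<forall>j<(N::nat). w j - \<xi> \<bullet> v j > 0} = (\<Inter>j\<in>{..<N}. {x. inner (v j) x < w j})"
    by (auto simp: inner_commute)
  then show ?thesis by (auto intro!: open_INT open_halfspace_lt simp del: Inter_iff)
qed


lemma EXlam:
  fixes p b A :: real
  assumes p: "0 < p" "p < 1" and b: "b > 0" and A: "A \<ge> 0"
  shows "\<exists>l. 0 < l \<and> l < 1 \<and> l * A < l powr p * b"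
proof -
  have "((\<lambda>x::real. x powr (1 - p)) \<longlongrightarrow> 0) (at_right 0)"
    by (rule tendsto_zero_powrI[where b = "1 - p"]) (use p in \<open>auto intro: tendsto_ident_at eventually_at_rightI[of 0 1]\<close>)
  then have "eventually (\<lambda>x. x powr (1 - p) < b / (A + 1)) (at_right 0)"
    using b A by (intro order_tendstoD) auto
  moreover have "eventually (\<lambda>x::real. x < 1) (at_right 0)"
    by (intro eventually_at_rightI[of 0 1]) auto
  ultimately have "eventually (\<lambda>x::real. x powr (1 - p) < b / (A + 1) \<and> x < 1) (at_right 0)"
    by eventually_elim auto
  then obtain c where c: "c > 0" "\<forall>y>0. y < c \<longrightarrow> y powr (1 - p) < b / (A + 1) \<and> y < 1"
    unfolding eventually_at_right_field by auto
  define l where "l = min (c / 2) (1 / 2)"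
  have "0 < l" "l < c" using c by (auto simp: l_def)
  then have l: "0 < l" "l < 1" "l powr (1 - p) < b / (A + 1)" using c by auto
  then have "l powr (1 - p) * (A + 1) < b" using A by (simp add: pos_less_divide_eq)
  then have "l powr p * (l powr (1 - p) * (A + 1)) < l powr p * b" using l by simp
  moreover have "l powr p * l powr (1 - p) = l" using l by (simp add: powr_add[symmetric])
  ultimately have "l * (A + 1) < l powr p * b" by (simp add: mult.assoc[symmetric])
  then have "l * A < l powr p * b" using l by (simp add: algebra_simps)
  then show ?thesis using l by blast
qed

lemma EX:
  fixes v :: "nat \<Rightarrow> 'a::euclidean_space"
  assumes hemi: "\<forall>u::'a. norm u = 1 \<longrightarrow> (\<exists>j<N. v j \<bullet> u < 0)"
    and apos: "\<forall>j<N. alpha j > 0" and p: "0 \<le> p" "p < 1"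
    and zpos: "\<forall>j<N. z j > 0"
  shows "\<exists>m. (\<forall>j<N. z j - m \<bullet> v j > 0) \<and> (\<exists>e>0. \<forall>\<xi>\<in>ball m e. PR N v alpha p z \<xi> \<le> PR N v alpha p z m)"
proof -
  define K where "K = polyset N v z"
  define U where "U = {\<xi>::'a. \<forall>j<N. z j - \<xi> \<bullet> v j > 0}"
  have K: "compact K" unfolding K_def using BND[OF hemi] CLO compact_eq_bounded_closed by blast
  have UK: "U \<subseteq> K" by (auto simp: U_def K_def polyset_def less_imp_le)
  have U: "open U" unfolding U_def by (rule OPN)
  have 0: "0 \<in> K" using zpos by (auto simp: K_def polyset_def less_imp_le)
  have sK: "\<And>\<xi> j. \<xi> \<in> K \<Longrightarrow> j < N \<Longrightarrow> z j - \<xi> \<bullet> v j \<ge> 0" by (auto simp: K_def polyset_def)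
  have main: "\<exists>m\<in>U. \<forall>\<xi>\<in>U. PR N v alpha p z \<xi> \<le> PR N v alpha p z m"
  proof (cases "p = 0")
    case True
    define F where "F \<xi> = (\<Prod>j<N. (z j - \<xi> \<bullet> v j) powr alpha j)" for \<xi>
    have "continuous_on K F" unfolding F_def
      using sK apos by (intro continuous_intros continuous_on_powr') auto
    then obtain m where m: "m \<in> K" "\<forall>\<xi>\<in>K. F \<xi> \<le> F m"
      using continuous_attains_sup[OF K] 0 by blast
    have "F 0 > 0" unfolding F_def using zpos by (intro prod_pos) auto
    then have "F m > 0" using m 0 by force
    have "\<forall>j<N. z j - m \<bullet> v j \<noteq> 0"
    proof (intro allI impI notI)
      fix j assume j: "j < N" "z j - m \<bullet> v j = 0"
      then have "F m = 0" unfolding F_def by (subst prod_zero_iff) auto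
      then show False using \<open>F m > 0\<close> by simp
    qed
    then have mU: "m \<in> U" using sK[OF m(1)] by (force simp: U_def)
    have lnF: "PR N v alpha p z \<xi> = ln (F \<xi>)" if "\<xi> \<in> U" for \<xi>
      using that True unfolding PR_def gg_def F_def U_def by (subst ln_prod) auto
    have "\<forall>\<xi>\<in>U. PR N v alpha p z \<xi> \<le> PR N v alpha p z m"
    proof
      fix \<xi> assume "\<xi> \<in> U"
      then have "F \<xi> > 0" unfolding F_def U_def by (intro prod_pos) auto
      moreover have "F \<xi> \<le> F m" using m \<open>\<xi> \<in> U\<close> UK by auto
      ultimately show "PR N v alpha p z \<xi> \<le> PR N v alpha p z m"
        using lnF \<open>\<xi> \<in> U\<close> mU by simp
    qed
    then show ?thesis using mU by blast
  next
    case False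
    then have pp: "p > 0" using p by simp
    have PRe: "PR N v alpha p z \<xi> = (\<Sum>j<N. alpha j * (z j - \<xi> \<bullet> v j) powr p)" for \<xi>
      using False by (simp add: PR_def gg_def)
    have "continuous_on K (\<lambda>\<xi>. (\<Sum>j<N. alpha j * (z j - \<xi> \<bullet> v j) powr p))"
      using sK pp by (intro continuous_intros continuous_on_powr') auto
    then obtain m where m: "m \<in> K" "\<forall>\<xi>\<in>K. PR N v alpha p z \<xi> \<le> PR N v alpha p z m"
      using continuous_attains_sup[OF K] 0 unfolding PRe[abs_def] by blast
    have mU: "m \<in> U"
    proof (rule ccontr)
      assume "m \<notin> U"
      then obtain j0 where j0: "j0 < N" "z j0 - m \<bullet> v j0 = 0" using sK[OF m(1)] by (force simp: U_def)
      define s where "s j = z j - m \<bullet> v j" for j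
      define A where "A = PR N v alpha p z m"
      have A: "A \<ge> 0" unfolding A_def PRe using apos by (intro sum_nonneg) (simp add: less_imp_le)
      define b where "b = alpha j0 * z j0 powr p"
      have "alpha j0 > 0" "z j0 > 0" using apos zpos j0(1) by auto
      then have b: "b > 0" by (simp add: b_def)
      obtain l where l: "0 < l" "l < 1" "l * A < l powr p * b" using EXlam[OF pp p(2) b A] by blast
      define \<xi> where "\<xi> = (1 - l) *\<^sub>R m"
      have s\<xi>: "z j - \<xi> \<bullet> v j = (1 - l) * s j + l * z j" for j
        by (simp add: \<xi>_def s_def algebra_simps)
      have sj: "j < N \<Longrightarrow> s j \<ge> 0" for j using sK[OF m(1)] by (simp add: s_def)
      have "z j - \<xi> \<bullet> v j \<ge> 0" if "j < N" for j
        unfolding s\<xi> using sj[OF that] zpos that l by (intro add_nonneg_nonneg mult_nonneg_nonneg) auto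
      then have "\<xi> \<in> K" unfolding K_def polyset_def by auto
      have le: "(1 - l) * (alpha j * s j powr p) + (if j = j0 then l powr p * b else 0)
                \<le> alpha j * (z j - \<xi> \<bullet> v j) powr p" if j: "j < N" for j
      proof (cases "j = j0")
        case True
        then have "s j = 0" using j0 by (simp add: s_def)
        then show ?thesis using True zpos l j unfolding s\<xi> b_def by (simp add: powr_mult)
      next
        case False
        have "(1 - l) * s j powr p \<le> (1 - l) powr p * s j powr p"
          using powr_mono'[of p 1 "1 - l"] p l by (intro mult_right_mono) auto
        also have "\<dots> = ((1 - l) * s j) powr p" using l sj[OF j] by (simp add: powr_mult)
        also have "\<dots> \<le> ((1 - l) * s j + l * z j) powr p"
          using l sj[OF j] zpos j pp by (intro powr_mono2) auto
        finally have "(1 - l) * s j powr p \<le> ((1 - l) * s j + l * z j) powr p" .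
        then have "alpha j * ((1 - l) * s j powr p) \<le> alpha j * ((1 - l) * s j + l * z j) powr p"
          using apos j by (simp add: mult_left_mono)
        then show ?thesis using False unfolding s\<xi> by (simp add: algebra_simps)
      qed
      have "(\<Sum>j<N. (1 - l) * (alpha j * s j powr p) + (if j = j0 then l powr p * b else 0))
            \<le> PR N v alpha p z \<xi>" unfolding PRe using le by (intro sum_mono) auto
      moreover have "(\<Sum>j<N. (1 - l) * (alpha j * s j powr p) + (if j = j0 then l powr p * b else 0))
            = (1 - l) * A + l powr p * b"
        using j0 by (simp add: sum.distrib sum_distrib_left A_def PRe s_def)
      ultimately have "(1 - l) * A + l powr p * b \<le> A" using m \<open>\<xi> \<in> K\<close> A_def by force
      then show False using l by (simp add: algebra_simps)
    qed
    then show ?thesis using m UK by blast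
  qed
  then obtain m where mU: "m \<in> U" and mx: "\<forall>\<xi>\<in>U. PR N v alpha p z \<xi> \<le> PR N v alpha p z m" by blast
  obtain e where e: "e > 0" "ball m e \<subseteq> U" using U mU openE by blast
  show ?thesis using mU mx e by (auto simp: U_def intro!: exI[of _ m] exI[of _ e])
qed




lemma DSOL:
  fixes v :: "nat \<Rightarrow> 'a::euclidean_space"
  assumes hemi: "\<forall>u::'a. norm u = 1 \<longrightarrow> (\<exists>j<N. v j \<bullet> u < 0)"
    and cpos: "\<forall>j<N. c j > 0"
  shows "\<exists>D. (\<Sum>j<N. (c j * (v j \<bullet> D)) *\<^sub>R v j) = y"
proof -
  define L where "L x = (\<Sum>j<N. (c j * (v j \<bullet> x)) *\<^sub>R v j)" for x
  have lin: "linear L"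
    by (rule linearI) (simp_all add: L_def inner_add_right scaleR_add_left sum.distrib
        algebra_simps scaleR_sum_right)
  have "x = 0" if "L x = 0" for x
  proof (rule ccontr)
    assume x: "x \<noteq> 0"
    define u where "u = (1 / norm x) *\<^sub>R x"
    have "norm u = 1" using x by (simp add: u_def)
    then obtain j where j: "j < N" "v j \<bullet> u < 0" using hemi by blast
    then have vx: "v j \<bullet> x \<noteq> 0" by (auto simp: u_def)
    have "x \<bullet> L x = (\<Sum>j<N. c j * (v j \<bullet> x)\<^sup>2)"
      by (simp add: L_def inner_sum_right power2_eq_square inner_commute algebra_simps)
    moreover have "(\<Sum>j<N. c j * (v j \<bullet> x)\<^sup>2) > 0"
    proof -
      have "c j * (v j \<bullet> x)\<^sup>2 > 0" using cpos j vx by simp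
      moreover have "c j * (v j \<bullet> x)\<^sup>2 \<le> (\<Sum>j<N. c j * (v j \<bullet> x)\<^sup>2)"
        by (rule member_le_sum[where f = "\<lambda>j. c j * (v j \<bullet> x)\<^sup>2"]) (use j cpos in \<open>auto intro: less_imp_le\<close>)
      ultimately show ?thesis by linarith
    qed
    ultimately show False using that by simp
  qed
  then have "inj L" using linear_injective_0[OF lin] by blast
  then have "surj L" using linear_injective_imp_surjective lin by blast
  then obtain D where "y = L D" by (meson surjD)
  then show ?thesis unfolding L_def by (intro exI[of _ D]) simp
qed

lemma GO:
  fixes v :: "nat \<Rightarrow> 'a::euclidean_space"
  assumes zpos: "\<forall>j<N. z j > 0"
    and crit0: "(\<Sum>j<N. (z j powr (p - 1) * alpha j) *\<^sub>R v j) = 0"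
    and Dsol: "(\<Sum>j<N. ((alpha j * z j powr (p - 2)) * (v j \<bullet> D)) *\<^sub>R v j) = (\<Sum>j<N. (alpha j * z j powr (p - 2) * \<beta> j) *\<^sub>R v j)"
  shows "\<forall>e>0. \<exists>d>0. \<forall>t. \<bar>t\<bar> < d \<longrightarrow>
     norm (\<Sum>j<N. ((z j + t * \<beta> j - (t *\<^sub>R D) \<bullet> v j) powr (p - 1) * alpha j) *\<^sub>R v j) \<le> e * \<bar>t\<bar>"
proof -
  define G where "G t = (\<Sum>j<N. ((z j + t * \<beta> j - (t *\<^sub>R D) \<bullet> v j) powr (p - 1) * alpha j) *\<^sub>R v j)" for t
  define d' where "d' j = (p - 1) * z j powr (p - 2) * (\<beta> j - D \<bullet> v j) * alpha j" for j
  have der: "(G has_vector_derivative (\<Sum>j<N. d' j *\<^sub>R v j)) (at 0)"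
    unfolding G_def
  proof (rule has_vector_derivative_sum)
    fix j assume "j \<in> {..<N}"
    then have zj: "z j > 0" using zpos by simp
    have h1: "DERIV (\<lambda>t. z j + t * (\<beta> j - D \<bullet> v j)) 0 :> (\<beta> j - D \<bullet> v j)"
      by (auto intro!: derivative_eq_intros)
    have h2: "DERIV (\<lambda>s. s powr (p - 1)) (z j) :> (p - 1) * z j powr (p - 1 - 1)"
      using has_real_derivative_powr[of "z j" "p - 1"] zj by simp
    have h3: "DERIV (\<lambda>t. (z j + t * (\<beta> j - D \<bullet> v j)) powr (p - 1)) 0 :> (p - 1) * z j powr (p - 1 - 1) * (\<beta> j - D \<bullet> v j)"
      using DERIV_chain2[of "\<lambda>s. s powr (p - 1)" "(p - 1) * z j powr (p - 1 - 1)" "\<lambda>t. z j + t * (\<beta> j - D \<bullet> v j)" 0] h1 h2 by simp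
    have h4: "DERIV (\<lambda>t. (z j + t * (\<beta> j - D \<bullet> v j)) powr (p - 1) * alpha j) 0 :> (p - 1) * z j powr (p - 1 - 1) * (\<beta> j - D \<bullet> v j) * alpha j"
      by (rule DERIV_cmult_right[OF h3])
    have h5: "d' j = (p - 1) * z j powr (p - 1 - 1) * (\<beta> j - D \<bullet> v j) * alpha j"
      by (simp add: d'_def)
    have h6: "((\<lambda>t. ((z j + t * (\<beta> j - D \<bullet> v j)) powr (p - 1) * alpha j) *\<^sub>R v j) has_vector_derivative
        ((z j + 0 * (\<beta> j - D \<bullet> v j)) powr (p - 1) * alpha j) *\<^sub>R 0 + d' j *\<^sub>R v j) (at 0)"
      unfolding h5 by (rule has_vector_derivative_scaleR[OF h4 has_vector_derivative_const])
    have e1: "(\<lambda>t. ((z j + t * \<beta> j - (t *\<^sub>R D) \<bullet> v j) powr (p - 1) * alpha j) *\<^sub>R v j)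
        = (\<lambda>t. ((z j + t * (\<beta> j - D \<bullet> v j)) powr (p - 1) * alpha j) *\<^sub>R v j)"
      by (simp add: algebra_simps)
    show "((\<lambda>t. ((z j + t * \<beta> j - (t *\<^sub>R D) \<bullet> v j) powr (p - 1) * alpha j) *\<^sub>R v j) has_vector_derivative d' j *\<^sub>R v j) (at 0)"
      unfolding e1 using h6 by simp
  qed
  have "(\<Sum>j<N. d' j *\<^sub>R v j) = (p - 1) *\<^sub>R ((\<Sum>j<N. (alpha j * z j powr (p - 2) * \<beta> j) *\<^sub>R v j) - (\<Sum>j<N. ((alpha j * z j powr (p - 2)) * (v j \<bullet> D)) *\<^sub>R v j))"
    unfolding scaleR_diff_right scaleR_sum_right sum_subtractf[symmetric] scaleR_diff_left[symmetric] scaleR_scaleR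
    by (rule sum.cong) (auto simp: d'_def inner_commute algebra_simps)
  also have "\<dots> = 0" using Dsol by simp
  finally have der0: "(G has_vector_derivative 0) (at 0)" using der by simp
  have G0: "G 0 = 0" using crit0 by (simp add: G_def)
  show ?thesis unfolding G_def[symmetric]
  proof (intro allI impI)
    fix e :: real assume e: "e > 0"
    from der0 have "(G has_derivative (\<lambda>x. x *\<^sub>R 0)) (at 0)" by (simp add: has_vector_derivative_def)
    then obtain d where "d > 0" "\<forall>y. norm (y - 0) < d \<longrightarrow> norm (G y - G 0 - (y - 0) *\<^sub>R 0) \<le> e * norm (y - 0)"
      using e unfolding has_derivative_at_alt by blast
    then show "\<exists>d>0. \<forall>t. \<bar>t\<bar> < d \<longrightarrow> norm (G t) \<le> e * \<bar>t\<bar>" using G0 by auto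
  qed
qed



lemma LINSUM:
  "(\<Sum>j<N. alpha j * (g1 p (w j - m \<bullet> v j) * ((w j - \<eta> \<bullet> v j) - (w j - m \<bullet> v j))))
   = - kap p * ((\<Sum>j<N. ((w j - m \<bullet> v j) powr (p - 1) * alpha j) *\<^sub>R v j) \<bullet> (\<eta> - m))"
proof -
  have "(\<Sum>j<N. ((w j - m \<bullet> v j) powr (p - 1) * alpha j) *\<^sub>R v j) \<bullet> (\<eta> - m)
     = (\<Sum>j<N. ((w j - m \<bullet> v j) powr (p - 1) * alpha j) * (v j \<bullet> (\<eta> - m)))"
    by (simp add: inner_sum_left)
  moreover have "\<And>j. (w j - \<eta> \<bullet> v j) - (w j - m \<bullet> v j) = - (v j \<bullet> (\<eta> - m))"
    by (simp add: inner_diff_right inner_commute)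
  ultimately show ?thesis
    by (simp add: sum_distrib_left g1_def sum_negf[symmetric] ) (simp add: algebra_simps)
qed

lemma CONT:
  fixes v :: "nat \<Rightarrow> 'a::euclidean_space"
  assumes "\<forall>\<xi>\<in>S. \<forall>j<N. w j - \<xi> \<bullet> v j > 0"
  shows "continuous_on S (PR N v alpha p w)"
proof -
  have "continuous_on S (\<lambda>\<xi>. gg p (w j - \<xi> \<bullet> v j))" if j: "j < N" for j
  proof (cases "p = 0")
    case True
    then show ?thesis unfolding gg_def using assms j by (auto intro!: continuous_intros) force
  next
    case False
    then show ?thesis unfolding gg_def using assms j
      by (auto intro!: continuous_intros continuous_on_powr' less_imp_le) force
  qed
  then show ?thesis unfolding PR_def[abs_def] by (intro continuous_intros) auto
qed


lemma DERIVPART: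
  fixes v :: "nat \<Rightarrow> 'a::euclidean_space" and D :: 'a
  assumes unit: "\<forall>j<N. norm (v j) = 1"
    and hemi: "\<forall>u::'a. norm u = 1 \<longrightarrow> (\<exists>j<N. v j \<bullet> u < 0)"
    and apos: "\<forall>j<N. alpha j > 0" and p: "0 \<le> p" "p < 1"
    and zpos: "\<forall>j<N. z j > 0"
    and xi0: "xi N v alpha p z = 0"
    and Gsmall: "\<forall>e>0. \<exists>d>0. \<forall>t. \<bar>t\<bar> < d \<longrightarrow>
     norm (\<Sum>j<N. ((z j + t * \<beta> j - (t *\<^sub>R D) \<bullet> v j) powr (p - 1) * alpha j) *\<^sub>R v j) \<le> e * \<bar>t\<bar>"
  shows "((\<lambda>t. xi N v alpha p (\<lambda>j. z j + t * \<beta> j)) has_vector_derivative D) (at 0)"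
proof -
  obtain \<delta> where N: "N > 0" and \<delta>: "\<delta> > 0" "\<forall>u::'a. norm u = 1 \<longrightarrow> (\<exists>j<N. v j \<bullet> u \<ge> \<delta>)"
    using DEL[OF hemi] by blast
  define X where "X t = xi N v alpha p (\<lambda>j. z j + t * \<beta> j)" for t
  have X0: "X 0 = 0" using xi0 by (simp add: X_def)
  define zmin where "zmin = Min (z ` {..<N})"
  define zmax where "zmax = Max (z ` {..<N})"
  define amin where "amin = Min (alpha ` {..<N})"
  have ne: "z ` {..<N} \<noteq> {}" "alpha ` {..<N} \<noteq> {}" using N by auto
  have zmin: "zmin > 0" unfolding zmin_def using ne zpos by (subst Min_gr_iff) auto
  have amin: "amin > 0" unfolding amin_def using ne apos by (subst Min_gr_iff) auto
  have zminle: "j < N \<Longrightarrow> zmin \<le> z j" for j unfolding zmin_def by (rule Min_le) auto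
  have zmaxge: "j < N \<Longrightarrow> z j \<le> zmax" for j unfolding zmax_def by (rule Max_ge) auto
  have aminle: "j < N \<Longrightarrow> amin \<le> alpha j" for j unfolding amin_def by (rule Min_le) auto
  define hi where "hi = 2 * zmax"
  have "z 0 > 0" using zpos N by simp
  then have hi: "hi > 0" using zmaxge[of 0] N by (simp add: hi_def)
  define C where "C = kap p * (1 - p) * hi powr (p - 2) / 2"
  have C: "C > 0" using kap_pos[OF p(1)] p hi by (simp add: C_def)
  define B where "B = (\<Sum>j<N. \<bar>\<beta> j\<bar>)"
  have Bge: "j < N \<Longrightarrow> \<bar>\<beta> j\<bar> \<le> B" for j
    unfolding B_def by (rule member_le_sum[where f = "\<lambda>j. \<bar>\<beta> j\<bar>"]) auto
  have B0: "B \<ge> 0" unfolding B_def by (simp add: sum_nonneg)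
  define K0 where "K0 = C * amin * \<delta>\<^sup>2"
  have K0: "K0 > 0" using C amin \<delta> by (simp add: K0_def)
  have kp: "kap p > 0" using kap_pos[OF p(1)] .
  have main: "\<exists>d>0. \<forall>t. norm (t - 0) < d \<longrightarrow> norm (X t - X 0 - (t - 0) *\<^sub>R D) \<le> e * norm (t - 0)"
    if e: "e > 0" for e
  proof -
    define \<epsilon> where "\<epsilon> = min e 1"
    have \<epsilon>: "\<epsilon> > 0" "\<epsilon> \<le> e" "\<epsilon> \<le> 1" using e by (auto simp: \<epsilon>_def)
    define e' where "e' = K0 * \<epsilon> / (2 * kap p)"
    have e': "e' > 0" using K0 \<epsilon> kp by (simp add: e'_def)
    obtain d0 where d0: "d0 > 0" "\<forall>t. \<bar>t\<bar> < d0 \<longrightarrow>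
       norm (\<Sum>j<N. ((z j + t * \<beta> j - (t *\<^sub>R D) \<bullet> v j) powr (p - 1) * alpha j) *\<^sub>R v j) \<le> e' * \<bar>t\<bar>"
      using Gsmall e' by blast
    define d1 where "d1 = zmin / (2 * (B + norm D + 1))"
    have BD: "B + norm D + 1 > 0" using B0 by (simp add: add_nonneg_pos)
    have d1: "d1 > 0" using zmin BD by (simp add: d1_def)
    define d where "d = min d0 d1"
    have d: "d > 0" using d0 d1 by (simp add: d_def)
    have "norm (X t - X 0 - (t - 0) *\<^sub>R D) \<le> e * norm (t - 0)" if t: "norm (t - 0) < d" for t
    proof (cases "t = 0")
      case True then show ?thesis by simp
    next
      case False
      have td0: "\<bar>t\<bar> < d0" and td1: "\<bar>t\<bar> < d1" using t by (auto simp: d_def)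
      define r where "r = \<epsilon> * \<bar>t\<bar>"
      have r: "r > 0" using \<epsilon> False by (simp add: r_def)
      define c0 where "c0 = t *\<^sub>R D"
      define w where "w j = z j + t * \<beta> j" for j
      have box: "0 < w j - \<xi> \<bullet> v j \<and> w j - \<xi> \<bullet> v j \<le> hi" if \<xi>: "\<xi> \<in> cball c0 r" and j: "j < N" for \<xi> j
      proof -
        have "norm \<xi> \<le> norm c0 + r"
          using \<xi> norm_triangle_ineq2[of \<xi> c0] by (auto simp: dist_norm norm_minus_commute)
        also have "\<dots> \<le> \<bar>t\<bar> * (norm D + 1)" using \<epsilon> mult_right_mono[of \<epsilon> 1 "\<bar>t\<bar>"] by (simp add: c0_def r_def algebra_simps)
        finally have n\<xi>: "norm \<xi> \<le> \<bar>t\<bar> * (norm D + 1)" .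
        have "\<bar>\<xi> \<bullet> v j\<bar> \<le> norm \<xi>" using Cauchy_Schwarz_ineq2[of \<xi> "v j"] unit j by simp
        moreover have "\<bar>t * \<beta> j\<bar> \<le> \<bar>t\<bar> * B" using Bge[OF j] by (simp add: abs_mult mult_left_mono)
        ultimately have "\<bar>t * \<beta> j - \<xi> \<bullet> v j\<bar> \<le> \<bar>t\<bar> * (B + norm D + 1)" using n\<xi> by (simp add: algebra_simps)
        also have "\<dots> < d1 * (B + norm D + 1)" using td1 BD by simp
        also have "\<dots> = zmin / 2" using BD unfolding d1_def by (simp add: field_simps)
        finally have "\<bar>t * \<beta> j - \<xi> \<bullet> v j\<bar> < zmin / 2" .
        then show ?thesis using zminle[OF j] zmaxge[OF j] zmin unfolding w_def hi_def abs_less_iff by auto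
      qed
      have c0c: "c0 \<in> cball c0 r" using r by simp
      have sph: "PR N v alpha p w y < PR N v alpha p w c0" if y: "norm (y - c0) = r" for y
      proof -
        have yc: "y \<in> cball c0 r" using y by (simp add: dist_norm norm_minus_commute)
        define a where "a j = w j - c0 \<bullet> v j" for j
        define b where "b j = w j - y \<bullet> v j" for j
        have le: "alpha j * gg p (b j) \<le> alpha j * (gg p (a j) + g1 p (a j) * (b j - a j)) - C * (alpha j * (b j - a j)\<^sup>2)"
          if j: "j < N" for j
        proof -
          have "gg p (b j) \<le> gg p (a j) + g1 p (a j) * (b j - a j) - C * (b j - a j)\<^sup>2"
            using SC[OF p, of "a j" "b j" hi] box[OF c0c j] box[OF yc j] unfolding a_def b_def C_def by simp
          then have "alpha j * gg p (b j) \<le> alpha j * (gg p (a j) + g1 p (a j) * (b j - a j) - C * (b j - a j)\<^sup>2)"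
            by (rule mult_left_mono) (use apos j in \<open>auto intro: less_imp_le\<close>)
          moreover have "\<And>xx dd. alpha j * (xx - C * dd) = alpha j * xx - C * (alpha j * dd)"
            by (simp add: algebra_simps)
          ultimately show ?thesis by simp
        qed
        have "PR N v alpha p w y \<le> (\<Sum>j<N. alpha j * (gg p (a j) + g1 p (a j) * (b j - a j)) - C * (alpha j * (b j - a j)\<^sup>2))"
          unfolding PR_def b_def[symmetric] using le by (intro sum_mono) auto
        also have "\<dots> = PR N v alpha p w c0 + (\<Sum>j<N. alpha j * (g1 p (a j) * (b j - a j))) - C * (\<Sum>j<N. alpha j * (b j - a j)\<^sup>2)"
          by (simp add: PR_def a_def sum_subtractf sum.distrib distrib_left sum_distrib_left)
        finally have P1: "PR N v alpha p w y \<le> PR N v alpha p w c0 + (\<Sum>j<N. alpha j * (g1 p (a j) * (b j - a j))) - C * (\<Sum>j<N. alpha j * (b j - a j)\<^sup>2)" .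
        define Gt where "Gt = (\<Sum>j<N. ((w j - c0 \<bullet> v j) powr (p - 1) * alpha j) *\<^sub>R v j)"
        have S1: "(\<Sum>j<N. alpha j * (g1 p (a j) * (b j - a j))) = - kap p * (Gt \<bullet> (y - c0))"
          unfolding a_def b_def Gt_def by (rule LINSUM)
        have "norm Gt \<le> e' * \<bar>t\<bar>" using d0(2) td0 unfolding Gt_def w_def c0_def by blast
        have "- kap p * (Gt \<bullet> (y - c0)) \<le> kap p * (norm Gt * r)"
        proof -
          have "- (Gt \<bullet> (y - c0)) \<le> norm Gt * r" using Cauchy_Schwarz_ineq2[of Gt "y - c0"] y by simp
          then have "kap p * (- (Gt \<bullet> (y - c0))) \<le> kap p * (norm Gt * r)" using kp by (intro mult_left_mono) auto
          then show ?thesis by simp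
        qed
        also have "\<dots> \<le> kap p * (e' * \<bar>t\<bar> * r)"
          using \<open>norm Gt \<le> e' * \<bar>t\<bar>\<close> kp r by (simp add: mult_right_mono)
        also have "\<dots> = K0 * r\<^sup>2 / 2" using kp by (simp add: e'_def r_def power2_eq_square)
        finally have S1le: "(\<Sum>j<N. alpha j * (g1 p (a j) * (b j - a j))) \<le> K0 * r\<^sup>2 / 2" using S1 by simp
        define u where "u = (1 / r) *\<^sub>R (y - c0)"
        have "norm u = 1" using y r by (simp add: u_def)
        then obtain j1 where j1: "j1 < N" "v j1 \<bullet> u \<ge> \<delta>" using \<delta> by blast
        have "b j1 - a j1 = - (r * (v j1 \<bullet> u))" using r
          by (simp add: a_def b_def u_def inner_diff_right inner_commute)
        then have "(b j1 - a j1)\<^sup>2 = r\<^sup>2 * (v j1 \<bullet> u)\<^sup>2" by (simp add: power2_eq_square)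
        moreover have "(v j1 \<bullet> u)\<^sup>2 \<ge> \<delta>\<^sup>2" using j1 \<delta> by (simp add: power_mono)
        ultimately have "(b j1 - a j1)\<^sup>2 \<ge> r\<^sup>2 * \<delta>\<^sup>2" by (simp add: mult_left_mono)
        moreover have "alpha j1 \<ge> amin" using aminle[OF j1(1)] .
        ultimately have "amin * (r\<^sup>2 * \<delta>\<^sup>2) \<le> alpha j1 * (b j1 - a j1)\<^sup>2"
          using amin by (intro mult_mono) auto
        also have "\<dots> \<le> (\<Sum>j<N. alpha j * (b j - a j)\<^sup>2)"
          by (rule member_le_sum[where f = "\<lambda>j. alpha j * (b j - a j)\<^sup>2"]) (use j1 apos in \<open>auto intro: less_imp_le\<close>)
        finally have "C * (amin * (r\<^sup>2 * \<delta>\<^sup>2)) \<le> C * (\<Sum>j<N. alpha j * (b j - a j)\<^sup>2)"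
          using C by simp
        then have S2: "K0 * r\<^sup>2 \<le> C * (\<Sum>j<N. alpha j * (b j - a j)\<^sup>2)" by (simp add: K0_def algebra_simps)
        have "K0 * r\<^sup>2 > 0" using K0 r by simp
        then show ?thesis using P1 S1le S2 by linarith
      qed
      have cont: "continuous_on (cball c0 r) (PR N v alpha p w)"
        using box by (intro CONT) blast
      obtain m where m: "m \<in> cball c0 r" "\<forall>\<xi>\<in>cball c0 r. PR N v alpha p w \<xi> \<le> PR N v alpha p w m"
        using continuous_attains_sup[OF compact_cball _ cont] c0c by blast
      have "norm (m - c0) \<noteq> r"
      proof
        assume "norm (m - c0) = r"
        then have "PR N v alpha p w m < PR N v alpha p w c0" by (rule sph)
        moreover have "PR N v alpha p w c0 \<le> PR N v alpha p w m" using m(2) c0c by blast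
        ultimately show False by simp
      qed
      then have mr: "dist c0 m < r" using m(1) by (simp add: dist_norm norm_minus_commute)
      define e2 where "e2 = r - dist c0 m"
      have e2: "e2 > 0" using mr by (simp add: e2_def)
      have "ball m e2 \<subseteq> cball c0 r"
      proof
        fix x assume "x \<in> ball m e2"
        then have "dist m x < e2" by simp
        then have "dist c0 x < r" using dist_triangle[of c0 x m] by (simp add: e2_def)
        then show "x \<in> cball c0 r" by simp
      qed
      then have loc: "\<forall>\<xi>\<in>ball m e2. PR N v alpha p w \<xi> \<le> PR N v alpha p w m" using m by blast
      have mpos: "\<forall>j<N. w j - m \<bullet> v j > 0" using box m(1) by blast
      have crit: "(\<Sum>j<N. ((w j - m \<bullet> v j) powr (p - 1) * alpha j) *\<^sub>R v j) = 0"
        using FL[OF mpos e2 p(1) loc] .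
      have "xi N v alpha p w = m" using CP[OF hemi apos p mpos crit] .
      then have "X t = m" by (simp add: X_def w_def[abs_def])
      then have "norm (X t - X 0 - (t - 0) *\<^sub>R D) = dist c0 m"
        using X0 by (simp add: dist_norm c0_def norm_minus_commute)
      also have "\<dots> \<le> e * norm (t - 0)" using mr \<epsilon> mult_right_mono[of \<epsilon> e "\<bar>t\<bar>"] by (simp add: r_def)
      finally show ?thesis .
    qed
    then show ?thesis using d by blast
  qed
  have "(X has_derivative (\<lambda>x. x *\<^sub>R D)) (at 0)"
    unfolding has_derivative_at_alt using main bounded_linear_scaleR_left by blast
  then show ?thesis unfolding has_vector_derivative_def X_def .
qed


theorem lemma4p3:
  fixes v :: "nat \<Rightarrow> 'a::euclidean_space" and alpha :: "nat \<Rightarrow> real"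
    and N :: nat and p :: real and z \<beta> :: "nat \<Rightarrow> real"
  assumes unit: "\<forall>j<N. norm (v j) = 1"
    and not_hemi: "\<forall>u::'a. norm u = 1 \<longrightarrow> (\<exists>j<N. v j \<bullet> u < 0)"
    and alpha_pos: "\<forall>j<N. alpha j > 0"
    and p: "0 \<le> p" "p < 1"
    and z_pos: "\<forall>j<N. z j > 0"
    and xi0: "xi N v alpha p z = 0"
  shows "(\<exists>D. ((\<lambda>t. xi N v alpha p (\<lambda>j. z j + t * \<beta> j)) has_vector_derivative D) (at 0))
         \<and> (\<Sum>j<N. (z j powr (p - 1) * alpha j) *\<^sub>R v j) = 0"
proof -
  obtain m e where mpos: "\<forall>j<N. z j - m \<bullet> v j > 0" and e: "e > 0"
    and loc: "\<forall>\<xi>\<in>ball m e. PR N v alpha p z \<xi> \<le> PR N v alpha p z m"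
    using EX[OF not_hemi alpha_pos p z_pos] by blast
  have crit: "(\<Sum>j<N. ((z j - m \<bullet> v j) powr (p - 1) * alpha j) *\<^sub>R v j) = 0"
    using FL[OF mpos e p(1) loc] .
  have "xi N v alpha p z = m" using CP[OF not_hemi alpha_pos p mpos crit] .
  then have m0: "m = 0" using xi0 by simp
  have crit0: "(\<Sum>j<N. (z j powr (p - 1) * alpha j) *\<^sub>R v j) = 0" using crit m0 by simp
  have cpos: "\<forall>j<N. alpha j * z j powr (p - 2) > 0" using alpha_pos z_pos by (auto intro: mult_pos_pos)
  obtain D where Dsol: "(\<Sum>j<N. ((alpha j * z j powr (p - 2)) * (v j \<bullet> D)) *\<^sub>R v j)
      = (\<Sum>j<N. (alpha j * z j powr (p - 2) * \<beta> j) *\<^sub>R v j)"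
    using DSOL[OF not_hemi cpos] by blast
  have Gsmall: "\<forall>e>0. \<exists>d>0. \<forall>t. \<bar>t\<bar> < d \<longrightarrow>
     norm (\<Sum>j<N. ((z j + t * \<beta> j - (t *\<^sub>R D) \<bullet> v j) powr (p - 1) * alpha j) *\<^sub>R v j) \<le> e * \<bar>t\<bar>"
    using GO[OF z_pos crit0 Dsol] .
  have "((\<lambda>t. xi N v alpha p (\<lambda>j. z j + t * \<beta> j)) has_vector_derivative D) (at 0)"
    using DERIVPART[OF unit not_hemi alpha_pos p z_pos xi0 Gsmall] .
  then show ?thesis using crit0 by blast
qed

end
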